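(* In the converse setting below, \[ \sum_{i=1}^n I(X_i;W_1\mid Y_1^{i-1}Y_2^{i-1}S^{i-1})\ \le\ \frac{H(W_1)}{1-\delta_1\delta_2}=\frac{N_1L\log_2 q}{1-\delta_1\delta_2}. \]
   Context: Converse setting. $0<\delta_1,\delta_2<1$. Messages $W_1$ uniform on $\mathbb{F}_q^{LN_1}$ and $W_2$ uniform on $\mathbb{F}_q^{LN_2}$, and Alice's private randomness $\Theta_A$, are mutually independent. Channel states $S_1,\dots,S_n\in\{B,C,BC,\emptyset\}$ are i.i.d., independent of $(W_1,W_2,\Theta_A)$, with Bob receiving with probability $1-\delta_1$ and Calvin with probability $1-\delta_2$, independently. Inputs $X_i=f_i(W_1,W_2,\Theta_A,S^{i-1})\in\mathbb{F}_q^L$ (honest acknowledgments). Outputs: $Y_{1,i}=X_i$ if Bob receives packet $i$, else $\perp$; $Y_{2,i}=X_i$ if Calvin receives packet $i$, else $\perp$. $V^i=(V_1,\dots,V_i)$ ($V^0$ empty). Logarithms base 2. *)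

theory Defs
  imports "HOL-Probability.Probability"
begin

definition entropy_pmf :: "'a pmf \<Rightarrow> real" where
  "entropy_pmf p = - (\<Sum>x\<in>set_pmf p. pmf p x * log 2 (pmf p x))"

definition H :: "'w pmf \<Rightarrow> ('w \<Rightarrow> 'a) \<Rightarrow> real" where
  "H P X = entropy_pmf (map_pmf X P)"

definition cond_MI :: "'w pmf \<Rightarrow> ('w \<Rightarrow> 'a) \<Rightarrow> ('w \<Rightarrow> 'b) \<Rightarrow> ('w \<Rightarrow> 'c) \<Rightarrow> real" where
  "cond_MI P X Y Z =
     H P (\<lambda>w. (X w, Z w)) + H P (\<lambda>w. (Y w, Z w)) - H P (\<lambda>w. (X w, Y w, Z w)) - H P Z"

text \<open>Channel state of one packet: (Bob receives, Calvin receives); independent erasures.\<close>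
type_synonym chstate = "bool \<times> bool"

definition state_pmf :: "real \<Rightarrow> real \<Rightarrow> chstate pmf" where
  "state_pmf \<delta>1 \<delta>2 = pair_pmf (bernoulli_pmf (1 - \<delta>1)) (bernoulli_pmf (1 - \<delta>2))"

text \<open>Sample space: (W1, W2, Theta_A, S) with S = (S_0,...,S_{n-1}) i.i.d. (0-based packet index).
  W1 uniform on F_q^(L N1), W2 uniform on F_q^(L N2), all mutually independent.\<close>
definition sample_pmf ::
  "nat \<Rightarrow> nat \<Rightarrow> nat \<Rightarrow> 't pmf \<Rightarrow> real \<Rightarrow> real \<Rightarrow> nat
     \<Rightarrow> ('a::finite list \<times> 'a list \<times> 't \<times> (nat \<Rightarrow> chstate)) pmf" where
  "sample_pmf L N1 N2 P\<Theta> \<delta>1 \<delta>2 n =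
     do { w1 \<leftarrow> pmf_of_set {xs. length xs = L * N1};
          w2 \<leftarrow> pmf_of_set {xs. length xs = L * N2};
          th \<leftarrow> P\<Theta>;
          s \<leftarrow> Pi_pmf {..<n} (False, False) (\<lambda>_. state_pmf \<delta>1 \<delta>2);
          return_pmf (w1, w2, th, s) }"

text \<open>Channel input X_i = f_i(W1, W2, Theta_A, S^{i-1}); here packet i (0-based) sees states 0..i-1.\<close>
definition Xin :: "(nat \<Rightarrow> 'a list \<Rightarrow> 'a list \<Rightarrow> 't \<Rightarrow> chstate list \<Rightarrow> 'a list) \<Rightarrow> nat
     \<Rightarrow> ('a list \<times> 'a list \<times> 't \<times> (nat \<Rightarrow> chstate)) \<Rightarrow> 'a list" where
  "Xin f i \<omega> = (case \<omega> of (w1, w2, th, s) \<Rightarrow> f i w1 w2 th (map s [0..<i]))"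

text \<open>Outputs: None stands for the erasure symbol.\<close>
definition Y1 :: "(nat \<Rightarrow> 'a list \<Rightarrow> 'a list \<Rightarrow> 't \<Rightarrow> chstate list \<Rightarrow> 'a list) \<Rightarrow> nat
     \<Rightarrow> ('a list \<times> 'a list \<times> 't \<times> (nat \<Rightarrow> chstate)) \<Rightarrow> 'a list option" where
  "Y1 f i \<omega> = (case \<omega> of (w1, w2, th, s) \<Rightarrow> if fst (s i) then Some (Xin f i \<omega>) else None)"

definition Y2 :: "(nat \<Rightarrow> 'a list \<Rightarrow> 'a list \<Rightarrow> 't \<Rightarrow> chstate list \<Rightarrow> 'a list) \<Rightarrow> nat
     \<Rightarrow> ('a list \<times> 'a list \<times> 't \<times> (nat \<Rightarrow> chstate)) \<Rightarrow> 'a list option" where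
  "Y2 f i \<omega> = (case \<omega> of (w1, w2, th, s) \<Rightarrow> if snd (s i) then Some (Xin f i \<omega>) else None)"

definition W1 :: "('a list \<times> 'a list \<times> 't \<times> (nat \<Rightarrow> chstate)) \<Rightarrow> 'a list" where
  "W1 \<omega> = fst \<omega>"

definition S :: "('a list \<times> 'a list \<times> 't \<times> (nat \<Rightarrow> chstate)) \<Rightarrow> nat \<Rightarrow> chstate" where
  "S \<omega> = snd (snd (snd \<omega>))"

end

theory Submission
  imports Defs
begin


lemma entropy_map_inj:
  assumes "inj_on g (set_pmf p)"
  shows "entropy_pmf (map_pmf g p) = entropy_pmf p"
proof -
  have "entropy_pmf (map_pmf g p) = - (\<Sum>y\<in>g ` set_pmf p. pmf (map_pmf g p) y * log 2 (pmf (map_pmf g p) y))"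
    unfolding entropy_pmf_def set_map_pmf ..
  also have "\<dots> = - (\<Sum>x\<in>set_pmf p. pmf (map_pmf g p) (g x) * log 2 (pmf (map_pmf g p) (g x)))"
    by (simp only: sum.reindex[OF assms] o_def)
  also have "\<dots> = entropy_pmf p"
    unfolding entropy_pmf_def
  proof (intro arg_cong[where f=uminus] sum.cong refl)
    fix x assume "x \<in> set_pmf p"
    then have "pmf (map_pmf g p) (g x) = pmf p x" by (rule pmf_map_inj[OF assms])
    then show "pmf (map_pmf g p) (g x) * log 2 (pmf (map_pmf g p) (g x)) = pmf p x * log 2 (pmf p x)"
      by simp
  qed
  finally show ?thesis .
qed

lemma H_inj:
  assumes "inj g" shows "H P (\<lambda>w. g (X w)) = H P X"
proof -
  have "map_pmf (\<lambda>w. g (X w)) P = map_pmf g (map_pmf X P)" by (simp add: map_pmf_comp)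
  then show ?thesis
    unfolding H_def using entropy_map_inj[OF inj_on_subset[OF assms subset_UNIV]] by simp
qed

lemma pmf_bind_Pair:
  "pmf (bind_pmf \<mu> (\<lambda>s. map_pmf (Pair s) (E s))) (a,b) = pmf \<mu> a * pmf (E a) b"
proof -
  have "pmf (bind_pmf \<mu> (\<lambda>s. map_pmf (Pair s) (E s))) (a,b)
      = (\<Sum>s\<in>{a}. pmf (map_pmf (Pair s) (E s)) (a,b) * pmf \<mu> s)"
    unfolding pmf_bind
  proof (rule integral_measure_pmf_real)
    fix s assume "pmf (map_pmf (Pair s) (E s)) (a, b) \<noteq> 0"
    then have "(a,b) \<in> Pair s ` set_pmf (E s)" by (simp add: pmf_eq_0_set_pmf)
    then show "s \<in> {a}" by blast
  qed simp
  also have "\<dots> = pmf \<mu> a * pmf (E a) b"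
    using pmf_map_inj'[of "Pair a" "E a" b] by (simp add: inj_on_def)
  finally show ?thesis .
qed


lemma entropy_chain:
  assumes "finite (set_pmf \<mu>)" "\<And>s. s \<in> set_pmf \<mu> \<Longrightarrow> finite (set_pmf (E s))"
  shows "entropy_pmf (bind_pmf \<mu> (\<lambda>s. map_pmf (Pair s) (E s)))
       = entropy_pmf \<mu> + (\<Sum>s\<in>set_pmf \<mu>. pmf \<mu> s * entropy_pmf (E s))"
proof -
  let ?q = "bind_pmf \<mu> (\<lambda>s. map_pmf (Pair s) (E s))"
  have set: "set_pmf ?q = Sigma (set_pmf \<mu>) (\<lambda>s. set_pmf (E s))"
    by (auto simp: set_bind_pmf)
  have "entropy_pmf ?q = - (\<Sum>s\<in>set_pmf \<mu>. \<Sum>t\<in>set_pmf (E s). pmf \<mu> s * pmf (E s) t * log 2 (pmf \<mu> s * pmf (E s) t))"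
    unfolding entropy_pmf_def set using assms
    by (subst sum.Sigma) (auto intro!: sum.cong simp: pmf_bind_Pair)
  also have "\<dots> = - (\<Sum>s\<in>set_pmf \<mu>. pmf \<mu> s * log 2 (pmf \<mu> s) * (\<Sum>t\<in>set_pmf (E s). pmf (E s) t)
        + pmf \<mu> s * (\<Sum>t\<in>set_pmf (E s). pmf (E s) t * log 2 (pmf (E s) t)))"
  proof (intro arg_cong[where f=uminus] sum.cong refl)
    fix s assume s: "s \<in> set_pmf \<mu>"
    show "(\<Sum>t\<in>set_pmf (E s). pmf \<mu> s * pmf (E s) t * log 2 (pmf \<mu> s * pmf (E s) t)) =
      pmf \<mu> s * log 2 (pmf \<mu> s) * (\<Sum>t\<in>set_pmf (E s). pmf (E s) t)
        + pmf \<mu> s * (\<Sum>t\<in>set_pmf (E s). pmf (E s) t * log 2 (pmf (E s) t))"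
      unfolding sum_distrib_left sum.distrib[symmetric]
    proof (intro sum.cong refl)
      fix t assume t: "t \<in> set_pmf (E s)"
      have "log 2 (pmf \<mu> s * pmf (E s) t) = log 2 (pmf \<mu> s) + log 2 (pmf (E s) t)"
        using s t by (intro log_mult_pos) (auto simp: pmf_positive)
      thus "pmf \<mu> s * pmf (E s) t * log 2 (pmf \<mu> s * pmf (E s) t) =
        pmf \<mu> s * log 2 (pmf \<mu> s) * pmf (E s) t + pmf \<mu> s * (pmf (E s) t * log 2 (pmf (E s) t))"
        by (simp add: algebra_simps)
    qed
  qed
  also have "\<dots> = - (\<Sum>s\<in>set_pmf \<mu>. pmf \<mu> s * log 2 (pmf \<mu> s)
        + pmf \<mu> s * (\<Sum>t\<in>set_pmf (E s). pmf (E s) t * log 2 (pmf (E s) t)))"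
    using assms(2) by (intro arg_cong[where f=uminus] sum.cong refl) (simp add: sum_pmf_eq_1)
  also have "\<dots> = (- (\<Sum>s\<in>set_pmf \<mu>. pmf \<mu> s * log 2 (pmf \<mu> s)))
        + (\<Sum>s\<in>set_pmf \<mu>. pmf \<mu> s * (- (\<Sum>t\<in>set_pmf (E s). pmf (E s) t * log 2 (pmf (E s) t))))"
    by (simp only: sum.distrib minus_add_distrib mult_minus_right sum_negf)
  also have "\<dots> = entropy_pmf \<mu> + (\<Sum>s\<in>set_pmf \<mu>. pmf \<mu> s * entropy_pmf (E s))"
    unfolding entropy_pmf_def by (rule refl)
  finally show ?thesis .
qed



lemma entropy_map_le:
  assumes fin: "finite (set_pmf p)"
  shows "entropy_pmf (map_pmf g p) \<le> entropy_pmf p"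
proof -
  let ?A = "set_pmf p"
  define q where "q y = pmf (map_pmf g p) y" for y
  have q: "q y = (\<Sum>x\<in>{x\<in>?A. g x = y}. pmf p x)" for y
  proof -
    have "q y = measure p (g -` {y} \<inter> ?A)"
      unfolding q_def pmf_map by (simp add: measure_Int_set_pmf)
    also have "\<dots> = (\<Sum>x\<in>{x\<in>?A. g x = y}. pmf p x)"
      using fin by (subst measure_measure_pmf_finite) (auto intro!: sum.cong)
    finally show ?thesis .
  qed
  have le: "pmf p x \<le> q (g x)" if "x \<in> ?A" for x
  proof -
    have "pmf p x = (\<Sum>x\<in>{x}. pmf p x)" by simp
    also have "\<dots> \<le> (\<Sum>x'\<in>{x'\<in>?A. g x' = g x}. pmf p x')"
      using that fin by (intro sum_mono2) auto
    finally show ?thesis by (simp add: q)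
  qed
  have "entropy_pmf (map_pmf g p) = - (\<Sum>y\<in>g ` ?A. q y * log 2 (q y))"
    by (simp add: entropy_pmf_def q_def)
  also have "\<dots> = - (\<Sum>y\<in>g ` ?A. \<Sum>x\<in>{x\<in>?A. g x = y}. pmf p x * log 2 (q (g x)))"
    by (simp add: q sum_distrib_right)
  also have "\<dots> = - (\<Sum>x\<in>?A. pmf p x * log 2 (q (g x)))"
    by (rule arg_cong[where f=uminus], rule sum.image_gen[symmetric], rule fin)
  also have "\<dots> \<le> - (\<Sum>x\<in>?A. pmf p x * log 2 (pmf p x))"
    using le by (intro le_imp_neg_le sum_mono mult_left_mono log_mono) (auto simp: pmf_positive)
  finally show ?thesis unfolding entropy_pmf_def[of p] .
qed


definition updS :: "nat \<Rightarrow> chstate \<Rightarrow> ('a list \<times> 'a list \<times> 't \<times> (nat \<Rightarrow> chstate)) \<Rightarrow> ('a list \<times> 'a list \<times> 't \<times> (nat \<Rightarrow> chstate))" where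
  "updS i y \<omega> = (case \<omega> of (w1,w2,th,s) \<Rightarrow> (w1,w2,th,s(i:=y)))"

definition sampleA ::
  "nat \<Rightarrow> nat \<Rightarrow> nat \<Rightarrow> 't pmf \<Rightarrow> real \<Rightarrow> real \<Rightarrow> nat set
     \<Rightarrow> ('a::finite list \<times> 'a list \<times> 't \<times> (nat \<Rightarrow> chstate)) pmf" where
  "sampleA L N1 N2 P\<Theta> \<delta>1 \<delta>2 A =
     do { w1 \<leftarrow> pmf_of_set {xs. length xs = L * N1};
          w2 \<leftarrow> pmf_of_set {xs. length xs = L * N2};
          th \<leftarrow> P\<Theta>;
          s \<leftarrow> Pi_pmf A (False, False) (\<lambda>_. state_pmf \<delta>1 \<delta>2);
          return_pmf (w1, w2, th, s) }"

lemma sampleA_insert: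
  assumes "finite A" "i \<notin> A"
  shows "sampleA L N1 N2 P\<Theta> \<delta>1 \<delta>2 (insert i A)
    = bind_pmf (state_pmf \<delta>1 \<delta>2) (\<lambda>y. map_pmf (updS i y) (sampleA L N1 N2 P\<Theta> \<delta>1 \<delta>2 A))"
  unfolding sampleA_def Pi_pmf_insert'[OF assms]
  by (simp add: bind_assoc_pmf bind_return_pmf map_bind_pmf updS_def
      bind_commute_pmf[where A="state_pmf \<delta>1 \<delta>2"])

lemma S_updS: "S (updS i y \<omega>) i = y"
  by (cases \<omega>) (simp add: S_def updS_def)

lemma pair_pmf_alt: "pair_pmf A B = bind_pmf A (\<lambda>x. map_pmf (Pair x) B)"
  unfolding pair_pmf_def map_pmf_def by simp

lemma indep:
  fixes P\<Theta> :: "'t pmf"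
  assumes "finite A" "i \<notin> A" and inv: "\<And>\<omega> y. V (updS i y \<omega>) = V \<omega>"
  shows "map_pmf (\<lambda>\<omega>. (S \<omega> i, V \<omega>)) (sampleA L N1 N2 P\<Theta> \<delta>1 \<delta>2 (insert i A))
     = pair_pmf (state_pmf \<delta>1 \<delta>2) (map_pmf V (sampleA L N1 N2 P\<Theta> \<delta>1 \<delta>2 (insert i A)))"
proof -
  let ?PA = "sampleA L N1 N2 P\<Theta> \<delta>1 \<delta>2 A :: ('a::finite list \<times> 'a list \<times> 't \<times> (nat \<Rightarrow> chstate)) pmf"
  have "map_pmf V (sampleA L N1 N2 P\<Theta> \<delta>1 \<delta>2 (insert i A)) = map_pmf V ?PA"
    unfolding sampleA_insert[OF assms(1,2)] by (simp add: map_bind_pmf map_pmf_comp inv)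
  moreover have "map_pmf (\<lambda>\<omega>. (S \<omega> i, V \<omega>)) (sampleA L N1 N2 P\<Theta> \<delta>1 \<delta>2 (insert i A))
      = bind_pmf (state_pmf \<delta>1 \<delta>2) (\<lambda>y. map_pmf (Pair y) (map_pmf V ?PA))"
    unfolding sampleA_insert[OF assms(1,2)] by (simp add: map_bind_pmf map_pmf_comp inv S_updS)
  ultimately show ?thesis by (simp add: pair_pmf_alt)
qed


lemma set_state_pmf:
  assumes "0 < \<delta>1" "\<delta>1 < 1" "0 < \<delta>2" "\<delta>2 < 1"
  shows "set_pmf (state_pmf \<delta>1 \<delta>2) = UNIV"
  using assms by (simp add: state_pmf_def)

lemma UNIV_chstate: "(UNIV::chstate set) = {(True,True),(True,False),(False,True),(False,False)}"
  by (auto simp: UNIV_bool)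

lemma gen:
  fixes T :: "'w \<Rightarrow> chstate" and Z :: "'w \<Rightarrow> 'z" and X :: "'w \<Rightarrow> 'x"
  assumes ind: "map_pmf (\<lambda>\<omega>. (T \<omega>, (Z \<omega>, X \<omega>))) P = pair_pmf (state_pmf \<delta>1 \<delta>2) (map_pmf (\<lambda>\<omega>. (Z \<omega>, X \<omega>)) P)"
    and fin: "finite (set_pmf (map_pmf (\<lambda>\<omega>. (Z \<omega>, X \<omega>)) P))"
    and d: "0 < \<delta>1" "\<delta>1 < 1" "0 < \<delta>2" "\<delta>2 < 1"
  shows "H P (\<lambda>\<omega>. (T \<omega>, (Z \<omega>, (if fst (T \<omega>) then Some (X \<omega>) else None), (if snd (T \<omega>) then Some (X \<omega>) else None))))
     = entropy_pmf (state_pmf \<delta>1 \<delta>2) + \<delta>1 * \<delta>2 * H P Z + (1 - \<delta>1 * \<delta>2) * H P (\<lambda>\<omega>. (Z \<omega>, X \<omega>))"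
proof -
  let ?\<mu> = "state_pmf \<delta>1 \<delta>2"
  let ?D = "map_pmf (\<lambda>\<omega>. (Z \<omega>, X \<omega>)) P"
  define k where "k s zx = (fst zx, (if fst s then Some (snd zx) else None), (if snd s then Some (snd zx) else None))"
    for s :: chstate and zx :: "'z \<times> 'x"
  have "map_pmf (\<lambda>\<omega>. (T \<omega>, (Z \<omega>, (if fst (T \<omega>) then Some (X \<omega>) else None), (if snd (T \<omega>) then Some (X \<omega>) else None)))) P
      = map_pmf (\<lambda>(s, zx). (s, k s zx)) (map_pmf (\<lambda>\<omega>. (T \<omega>, (Z \<omega>, X \<omega>))) P)"
    unfolding map_pmf_comp by (intro map_pmf_cong) (simp_all add: k_def)
  also have "\<dots> = bind_pmf ?\<mu> (\<lambda>s. map_pmf (Pair s) (map_pmf (k s) ?D))"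
    unfolding ind pair_pmf_alt by (simp add: map_bind_pmf map_pmf_comp)
  finally have eq: "map_pmf (\<lambda>\<omega>. (T \<omega>, (Z \<omega>, (if fst (T \<omega>) then Some (X \<omega>) else None), (if snd (T \<omega>) then Some (X \<omega>) else None)))) P
      = bind_pmf ?\<mu> (\<lambda>s. map_pmf (Pair s) (map_pmf (k s) ?D))" .
  have ent: "entropy_pmf (bind_pmf ?\<mu> (\<lambda>s. map_pmf (Pair s) (map_pmf (k s) ?D)))
     = entropy_pmf ?\<mu> + (\<Sum>s\<in>set_pmf ?\<mu>. pmf ?\<mu> s * entropy_pmf (map_pmf (k s) ?D))"
    by (rule entropy_chain) (use fin in auto)
  have eFF: "entropy_pmf (map_pmf (k (False,False)) ?D) = H P Z"
  proof -
    have "map_pmf (k (False,False)) ?D = map_pmf (\<lambda>z. (z, None, None)) (map_pmf Z P)"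
      by (simp add: map_pmf_comp k_def)
    also have "entropy_pmf \<dots> = entropy_pmf (map_pmf Z P)"
      by (rule entropy_map_inj) (auto simp: inj_on_def)
    finally show ?thesis by (simp add: H_def)
  qed
  have eO: "entropy_pmf (map_pmf (k s) ?D) = H P (\<lambda>\<omega>. (Z \<omega>, X \<omega>))" if "s \<noteq> (False,False)" for s
  proof -
    have "inj_on (k s) (set_pmf ?D)"
      using that by (cases s) (auto simp: inj_on_def k_def)
    then show ?thesis by (simp add: entropy_map_inj H_def)
  qed
  have p: "pmf ?\<mu> (a,b) = (if a then 1 - \<delta>1 else \<delta>1) * (if b then 1 - \<delta>2 else \<delta>2)" for a b
    using d by (cases a; cases b) (simp_all add: state_pmf_def pmf_pair)
  show ?thesis
    unfolding H_def[of P "\<lambda>\<omega>. (T \<omega>, Z \<omega>, (if fst (T \<omega>) then Some (X \<omega>) else None), (if snd (T \<omega>) then Some (X \<omega>) else None))"]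
      eq ent set_state_pmf[OF d] UNIV_chstate
    using eFF eO[of "(True,True)"] eO[of "(True,False)"] eO[of "(False,True)"]
    by (simp add: p algebra_simps)
qed


lemma Y1_alt: "Y1 f i \<omega> = (if fst (S \<omega> i) then Some (Xin f i \<omega>) else None)"
  by (cases \<omega>) (simp add: Y1_def S_def)

lemma Y2_alt: "Y2 f i \<omega> = (if snd (S \<omega> i) then Some (Xin f i \<omega>) else None)"
  by (cases \<omega>) (simp add: Y2_def S_def)

lemma Xin_upd: "j \<le> i \<Longrightarrow> Xin f j (updS i y \<omega>) = Xin f j \<omega>"
  by (cases \<omega>) (auto simp: Xin_def updS_def intro!: arg_cong[where f="f j _ _ _"])

lemma S_upd: "j \<noteq> i \<Longrightarrow> S (updS i y \<omega>) j = S \<omega> j"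
  by (cases \<omega>) (simp add: S_def updS_def)

lemma W1_upd: "W1 (updS i y \<omega>) = W1 \<omega>"
  by (cases \<omega>) (simp add: W1_def updS_def)

lemma Y1_upd: "j < i \<Longrightarrow> Y1 f j (updS i y \<omega>) = Y1 f j \<omega>"
  by (simp add: Y1_alt S_upd Xin_upd)

lemma Y2_upd: "j < i \<Longrightarrow> Y2 f j (updS i y \<omega>) = Y2 f j \<omega>"
  by (simp add: Y2_alt S_upd Xin_upd)

definition Zf where
  "Zf f i \<omega> = (map (\<lambda>j. Y1 f j \<omega>) [0..<i], map (\<lambda>j. Y2 f j \<omega>) [0..<i], map (S \<omega>) [0..<i])"

lemma Zf_upd: "Zf f i (updS i y \<omega>) = Zf f i \<omega>"
  by (simp add: Zf_def Y1_upd Y2_upd S_upd)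

definition gapp where
  "gapp x = (case x of (s, ((a, b, c), y1, y2)) \<Rightarrow> (a @ [y1], b @ [y2], c @ [s]))"

lemma inj_gapp: "inj gapp"
  by (auto simp: inj_def gapp_def)

definition gapp2 where
  "gapp2 x = (case x of (s, ((w, z), y1, y2)) \<Rightarrow> (w, gapp (s, (z, y1, y2))))"

lemma inj_gapp2: "inj gapp2"
  using inj_gapp by (auto simp: inj_def gapp2_def)

lemma Zf_Suc: "Zf f (Suc i) \<omega> = gapp (S \<omega> i, (Zf f i \<omega>, Y1 f i \<omega>, Y2 f i \<omega>))"
  by (simp add: Zf_def gapp_def)

lemma finite_len: "finite {xs::'a::finite list. length xs = k}"
  using finite_lists_length_eq[of "UNIV::'a set" k] by simp

lemma fin_map: "(\<And>\<omega>. \<omega> \<in> set_pmf P \<Longrightarrow> V \<omega> \<in> B) \<Longrightarrow> finite B \<Longrightarrow> finite (set_pmf (map_pmf V P))"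
  by (auto intro: finite_subset)


lemma Xin_len: "(\<And>i w1 w2 th ss. length (f i w1 w2 th ss) = L) \<Longrightarrow> length (Xin f j \<omega>) = L"
  by (cases \<omega>) (simp add: Xin_def)

lemma Y1_in: "(\<And>i w1 w2 th ss. length (f i w1 w2 th ss) = L) \<Longrightarrow>
   Y1 f j \<omega> \<in> insert None (Some ` {xs. length xs = L})"
  by (auto simp: Y1_alt Xin_len)

lemma Y2_in: "(\<And>i w1 w2 th ss. length (f i w1 w2 th ss) = L) \<Longrightarrow>
   Y2 f j \<omega> \<in> insert None (Some ` {xs. length xs = L})"
  by (auto simp: Y2_alt Xin_len)

lemma Zf_in:
  fixes f :: "nat \<Rightarrow> 'a::finite list \<Rightarrow> 'a list \<Rightarrow> 't \<Rightarrow> chstate list \<Rightarrow> 'a list"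
  assumes "\<And>i w1 w2 th ss. length (f i w1 w2 th ss) = L"
  shows "Zf f i \<omega> \<in> {a. set a \<subseteq> insert None (Some ` {xs. length xs = L}) \<and> length a = i}
     \<times> {a. set a \<subseteq> insert None (Some ` {xs. length xs = L}) \<and> length a = i} \<times> {c::chstate list. set c \<subseteq> UNIV \<and> length c = i}"
proof -
  have "\<And>j. Y1 f j \<omega> \<in> insert None (Some ` {xs. length xs = L})"
       "\<And>j. Y2 f j \<omega> \<in> insert None (Some ` {xs. length xs = L})"
    using Y1_in[of f L, OF assms] Y2_in[of f L, OF assms] by blast+
  then show ?thesis unfolding Zf_def by (simp add: image_subset_iff del: insert_iff)
qed

lemma finite_Zset:
  "finite ({a. set a \<subseteq> insert None (Some ` {xs::'a::finite list. length xs = L}) \<and> length a = i}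
     \<times> {a. set a \<subseteq> insert None (Some ` {xs::'a list. length xs = L}) \<and> length a = i} \<times> {c::chstate list. set c \<subseteq> UNIV \<and> length c = i})"
  by (intro finite_cartesian_product finite_lists_length_eq finite_insert[THEN iffD2] finite_imageI finite_len) simp_all

lemma W1_in:
  fixes P\<Theta> :: "'t pmf"
  assumes "\<omega> \<in> set_pmf (sample_pmf L N1 N2 P\<Theta> \<delta>1 \<delta>2 n :: ('a::finite list \<times> 'a list \<times> 't \<times> (nat \<Rightarrow> chstate)) pmf)"
  shows "W1 \<omega> \<in> {xs. length xs = L * N1}"
proof -
  have ne: "{xs::'a list. length xs = k} \<noteq> {}" for k
    by (metis (mono_tags, lifting) empty_Collect_eq length_replicate)
  have s1: "set_pmf (pmf_of_set {xs::'a list. length xs = k}) = {xs. length xs = k}" for k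
    using ne[of k] finite_len[where 'a='a, of k] by simp
  show ?thesis using assms
    by (auto simp: sample_pmf_def W1_def set_bind_pmf s1)
qed

lemma map_W1:
  fixes P\<Theta> :: "'t pmf"
  shows "map_pmf W1 (sample_pmf L N1 N2 P\<Theta> \<delta>1 \<delta>2 n :: ('a::finite list \<times> 'a list \<times> 't \<times> (nat \<Rightarrow> chstate)) pmf)
     = pmf_of_set {xs. length xs = L * N1}"
  by (simp add: sample_pmf_def W1_def map_bind_pmf bind_return_pmf')

lemma entropy_uniform:
  assumes "finite A" "A \<noteq> {}"
  shows "entropy_pmf (pmf_of_set A) = log 2 (card A)"
proof -
  have c: "card A > 0" using assms by (simp add: card_gt_0_iff)
  have "entropy_pmf (pmf_of_set A) = - (\<Sum>x\<in>A. (1 / card A) * log 2 (1 / card A))"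
    unfolding entropy_pmf_def using assms by (intro arg_cong[where f=uminus] sum.cong) auto
  also have "\<dots> = - log 2 (1 / card A)" using c by simp
  also have "\<dots> = log 2 (card A)" using c by (simp add: log_divide)
  finally show ?thesis .
qed

lemma H_W1:
  fixes P\<Theta> :: "'t pmf"
  shows "H (sample_pmf L N1 N2 P\<Theta> \<delta>1 \<delta>2 n :: ('a::finite list \<times> 'a list \<times> 't \<times> (nat \<Rightarrow> chstate)) pmf) W1
     = real (N1 * L) * log 2 (real CARD('a))"
proof -
  have ne: "{xs::'a list. length xs = k} \<noteq> {}" for k
    by (metis (mono_tags, lifting) empty_Collect_eq length_replicate)
  have card: "card {xs::'a list. length xs = k} = CARD('a) ^ k" for k
    using card_lists_length_eq[of "UNIV::'a set" k] by simp
  show ?thesis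
    unfolding H_def map_W1 entropy_uniform[OF finite_len ne] card
    by (simp add: log_nat_power algebra_simps)
qed

lemma H_const: "H P (\<lambda>\<omega>. c) = 0"
  by (simp add: H_def entropy_pmf_def map_pmf_const)


theorem lemma8:
  fixes f :: "nat \<Rightarrow> 'a::{finite,field} list \<Rightarrow> 'a list \<Rightarrow> 't \<Rightarrow> chstate list \<Rightarrow> 'a list"
    and P\<Theta> :: "'t pmf"
    and L N1 N2 n :: nat
    and \<delta>1 \<delta>2 :: real
  assumes "0 < \<delta>1" "\<delta>1 < 1" "0 < \<delta>2" "\<delta>2 < 1"
    and "\<And>i w1 w2 th ss. length (f i w1 w2 th ss) = L"
  defines "P \<equiv> sample_pmf L N1 N2 P\<Theta> \<delta>1 \<delta>2 n"
  shows "(\<Sum>i<n. cond_MI P (Xin f i) W1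
             (\<lambda>\<omega>. (map (\<lambda>j. Y1 f j \<omega>) [0..<i], map (\<lambda>j. Y2 f j \<omega>) [0..<i], map (S \<omega>) [0..<i])))
           \<le> H P W1 / (1 - \<delta>1 * \<delta>2)
       \<and> H P W1 / (1 - \<delta>1 * \<delta>2) = real (N1 * L) * log 2 (real CARD('a)) / (1 - \<delta>1 * \<delta>2)"
proof -
  note d = assms(1-4)
  note flen = assms(5)
  let ?c = "1 - \<delta>1 * \<delta>2"
  have "\<delta>1 * \<delta>2 < 1 * 1" using d by (intro mult_strict_mono) auto
  then have cpos: "?c > 0" by simp
  define G where "G i = H P W1 + H P (Zf f i) - H P (\<lambda>\<omega>. (W1 \<omega>, Zf f i \<omega>))" for i
  have zf: "(\<lambda>\<omega>. (map (\<lambda>j. Y1 f j \<omega>) [0..<i], map (\<lambda>j. Y2 f j \<omega>) [0..<i], map (S \<omega>) [0..<i])) = Zf f i" for i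
    by (simp add: Zf_def fun_eq_iff)
  define ZS where "ZS i = {a. set a \<subseteq> insert None (Some ` {xs::'a list. length xs = L}) \<and> length a = i}
     \<times> {a. set a \<subseteq> insert None (Some ` {xs::'a list. length xs = L}) \<and> length a = i} \<times> {c::chstate list. set c \<subseteq> UNIV \<and> length c = i}" for i
  have ZSfin: "finite (ZS i)" for i unfolding ZS_def by (rule finite_Zset)
  have Zin: "Zf f i \<omega> \<in> ZS i" for i \<omega> unfolding ZS_def by (rule Zf_in[OF flen])
  have Win: "W1 \<omega> \<in> {xs. length xs = L * N1}" if "\<omega> \<in> set_pmf P" for \<omega>
    using that unfolding P_def by (rule W1_in)
  have Xin_in: "Xin f i \<omega> \<in> {xs. length xs = L}" for i \<omega> using Xin_len[OF flen] by simp
  have step: "?c * cond_MI P (Xin f i) W1 (Zf f i) = G (Suc i) - G i" if "i < n" for i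
  proof -
    have Peq: "P = sampleA L N1 N2 P\<Theta> \<delta>1 \<delta>2 (insert i ({..<n} - {i}))"
    proof -
      have "insert i ({..<n} - {i}) = {..<n}" using that by auto
      then show ?thesis unfolding P_def sample_pmf_def sampleA_def by simp
    qed
    have ind1: "map_pmf (\<lambda>\<omega>. (S \<omega> i, (Zf f i \<omega>, Xin f i \<omega>))) P
        = pair_pmf (state_pmf \<delta>1 \<delta>2) (map_pmf (\<lambda>\<omega>. (Zf f i \<omega>, Xin f i \<omega>)) P)"
      unfolding Peq by (rule indep[where V="\<lambda>\<omega>. (Zf f i \<omega>, Xin f i \<omega>)"]) (auto simp: Zf_upd Xin_upd)
    have ind2: "map_pmf (\<lambda>\<omega>. (S \<omega> i, ((W1 \<omega>, Zf f i \<omega>), Xin f i \<omega>))) P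
        = pair_pmf (state_pmf \<delta>1 \<delta>2) (map_pmf (\<lambda>\<omega>. ((W1 \<omega>, Zf f i \<omega>), Xin f i \<omega>)) P)"
      unfolding Peq by (rule indep[where V="\<lambda>\<omega>. ((W1 \<omega>, Zf f i \<omega>), Xin f i \<omega>)"]) (auto simp: Zf_upd Xin_upd W1_upd)
    have fin1: "finite (set_pmf (map_pmf (\<lambda>\<omega>. (Zf f i \<omega>, Xin f i \<omega>)) P))"
      by (rule fin_map[where B="ZS i \<times> {xs. length xs = L}"]) (auto simp: Zin Xin_in ZSfin finite_len Xin_len[OF flen])
    have fin2: "finite (set_pmf (map_pmf (\<lambda>\<omega>. ((W1 \<omega>, Zf f i \<omega>), Xin f i \<omega>)) P))"
    proof (rule fin_map[where B="({xs. length xs = L * N1} \<times> ZS i) \<times> {xs. length xs = L}"])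
      fix \<omega> assume "\<omega> \<in> set_pmf P"
      then show "((W1 \<omega>, Zf f i \<omega>), Xin f i \<omega>) \<in> ({xs. length xs = L * N1} \<times> ZS i) \<times> {xs. length xs = L}"
        using Win[of \<omega>] Zin[of i \<omega>] Xin_in[of i \<omega>] by blast
    qed (simp add: ZSfin finite_len)
    note g1 = gen[OF ind1 fin1 d]
    note g2 = gen[OF ind2 fin2 d]
    have h1: "H P (Zf f (Suc i)) = H P (\<lambda>\<omega>. (S \<omega> i, (Zf f i \<omega>,
        (if fst (S \<omega> i) then Some (Xin f i \<omega>) else None), (if snd (S \<omega> i) then Some (Xin f i \<omega>) else None))))"
    proof -
      have "Zf f (Suc i) = (\<lambda>\<omega>. gapp (S \<omega> i, (Zf f i \<omega>,
        (if fst (S \<omega> i) then Some (Xin f i \<omega>) else None), (if snd (S \<omega> i) then Some (Xin f i \<omega>) else None))))"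
        by (simp add: fun_eq_iff Zf_Suc Y1_alt Y2_alt)
      then show ?thesis using H_inj[OF inj_gapp] by simp
    qed
    have h2: "H P (\<lambda>\<omega>. (W1 \<omega>, Zf f (Suc i) \<omega>)) = H P (\<lambda>\<omega>. (S \<omega> i, ((W1 \<omega>, Zf f i \<omega>),
        (if fst (S \<omega> i) then Some (Xin f i \<omega>) else None), (if snd (S \<omega> i) then Some (Xin f i \<omega>) else None))))"
    proof -
      have "(\<lambda>\<omega>. (W1 \<omega>, Zf f (Suc i) \<omega>)) = (\<lambda>\<omega>. gapp2 (S \<omega> i, ((W1 \<omega>, Zf f i \<omega>),
        (if fst (S \<omega> i) then Some (Xin f i \<omega>) else None), (if snd (S \<omega> i) then Some (Xin f i \<omega>) else None))))"
        by (simp add: fun_eq_iff Zf_Suc Y1_alt Y2_alt gapp2_def)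
      then show ?thesis using H_inj[OF inj_gapp2] by simp
    qed
    have sw1: "H P (\<lambda>\<omega>. (Xin f i \<omega>, Zf f i \<omega>)) = H P (\<lambda>\<omega>. (Zf f i \<omega>, Xin f i \<omega>))"
      using H_inj[of prod.swap P "\<lambda>\<omega>. (Zf f i \<omega>, Xin f i \<omega>)"] by simp
    have sw2: "H P (\<lambda>\<omega>. (Xin f i \<omega>, W1 \<omega>, Zf f i \<omega>)) = H P (\<lambda>\<omega>. ((W1 \<omega>, Zf f i \<omega>), Xin f i \<omega>))"
      using H_inj[of prod.swap P "\<lambda>\<omega>. ((W1 \<omega>, Zf f i \<omega>), Xin f i \<omega>)"] by simp
    show ?thesis
      unfolding cond_MI_def G_def h1 h2 g1 g2 sw1 sw2
      by (simp add: algebra_simps)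
  qed
  have G0: "G 0 = 0"
  proof -
    have "Zf f 0 = (\<lambda>\<omega>. ([], [], []))" by (simp add: Zf_def fun_eq_iff)
    moreover have "H P (\<lambda>\<omega>. (W1 \<omega>, ([] :: 'a list option list, [] :: 'a list option list, [] :: chstate list))) = H P W1"
      by (rule H_inj) (auto simp: inj_def)
    ultimately show ?thesis by (simp add: G_def H_const)
  qed
  have Gn: "G n \<le> H P W1"
  proof -
    have fin3: "finite (set_pmf (map_pmf (\<lambda>\<omega>. (W1 \<omega>, Zf f n \<omega>)) P))"
    proof (rule fin_map[where B="{xs. length xs = L * N1} \<times> ZS n"])
      fix \<omega> assume "\<omega> \<in> set_pmf P"
      then show "(W1 \<omega>, Zf f n \<omega>) \<in> {xs. length xs = L * N1} \<times> ZS n"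
        using Win[of \<omega>] Zin[of n \<omega>] by blast
    qed (simp add: ZSfin finite_len)
    have "H P (Zf f n) = entropy_pmf (map_pmf snd (map_pmf (\<lambda>\<omega>. (W1 \<omega>, Zf f n \<omega>)) P))"
      by (simp add: H_def map_pmf_comp)
    also have "\<dots> \<le> H P (\<lambda>\<omega>. (W1 \<omega>, Zf f n \<omega>))"
      unfolding H_def by (rule entropy_map_le[OF fin3])
    finally show ?thesis by (simp add: G_def)
  qed
  have "(\<Sum>i<n. cond_MI P (Xin f i) W1 (Zf f i)) = (\<Sum>i<n. (G (Suc i) - G i) / ?c)"
  proof (intro sum.cong refl)
    fix i assume "i \<in> {..<n}"
    then show "cond_MI P (Xin f i) W1 (Zf f i) = (G (Suc i) - G i) / ?c"
      using step[of i] cpos by (simp add: field_simps)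
  qed
  also have "\<dots> = (G n - G 0) / ?c"
    by (simp add: sum_divide_distrib[symmetric] sum_lessThan_telescope)
  also have "\<dots> \<le> H P W1 / ?c"
    using Gn G0 cpos by (simp add: divide_right_mono)
  finally have A: "(\<Sum>i<n. cond_MI P (Xin f i) W1 (Zf f i)) \<le> H P W1 / ?c" .
  have B: "H P W1 = real (N1 * L) * log 2 (real CARD('a))"
    unfolding P_def by (rule H_W1)
  show ?thesis using A B by (simp add: zf)
qed


end
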